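(* Let $r,s$ be positive integers and let $G$ be a complete $r$-partite graph on $n$ vertices that does not contain $M_{s+1}$ as a subgraph. If $n>2s+1$, then some part of $G$ has order at least $n-s$.
   Context: $M_{s+1}$ denotes the graph consisting of $s+1$ pairwise disjoint edges. *)

theory Defs
  imports Main
begin

text \<open>A simple graph is given by a finite vertex set V and a set E of edges,
each edge being a 2-element subset of V.\<close>

definition partition_into :: "'a set \<Rightarrow> 'a set set \<Rightarrow> bool" where
  "partition_into V P \<longleftrightarrow> (\<forall>A\<in>P. A \<noteq> {}) \<and> \<Union>P = V \<and>
     (\<forall>A\<in>P. \<forall>B\<in>P. A \<noteq> B \<longrightarrow> A \<inter> B = {})"

definition complete_multipartite :: "'a set \<Rightarrow> 'a set set \<Rightarrow> nat \<Rightarrow> 'a set set \<Rightarrow> bool" where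
  "complete_multipartite V E r P \<longleftrightarrow> partition_into V P \<and> card P = r \<and>
     E = {{x, y} | x y. \<exists>A\<in>P. \<exists>B\<in>P. A \<noteq> B \<and> x \<in> A \<and> y \<in> B}"

definition contains_matching :: "'a set set \<Rightarrow> nat \<Rightarrow> bool" where
  "contains_matching E k \<longleftrightarrow> (\<exists>M \<subseteq> E. finite M \<and> card M = k \<and>
     (\<forall>e\<in>M. \<forall>f\<in>M. e \<noteq> f \<longrightarrow> e \<inter> f = {}))"

end

theory Submission
  imports Defs
begin

theorem proposition12:
  fixes V :: "'a set" and E :: "'a set set" and P :: "'a set set" and r s n :: nat
  assumes "finite V" and "card V = n"
    and "r > 0" and "s > 0"
    and "complete_multipartite V E r P"
    and "\<not> contains_matching E (s + 1)"
    and "n > 2 * s + 1"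
  shows "\<exists>A\<in>P. card A \<ge> n - s"
proof (rule ccontr)
  assume small: "\<not> (\<exists>A\<in>P. card A \<ge> n - s)"
  have part: "partition_into V P" and Edef: "E = {{x, y} | x y. \<exists>A\<in>P. \<exists>B\<in>P. A \<noteq> B \<and> x \<in> A \<and> y \<in> B}"
    using assms(5) unfolding complete_multipartite_def by auto
  have UP: "\<Union>P = V" and disj: "\<And>A B. A\<in>P \<Longrightarrow> B\<in>P \<Longrightarrow> A \<noteq> B \<Longrightarrow> A \<inter> B = {}"
    using part unfolding partition_into_def by auto
  have finP: "finite P" using UP assms(1) by (metis finite_UnionD)
  define pt where "pt v = (THE A. A \<in> P \<and> v \<in> A)" for v
  have pt: "pt v \<in> P \<and> v \<in> pt v" if "v \<in> V" for v
  proof -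
    obtain A where A: "A \<in> P" "v \<in> A" using UP \<open>v \<in> V\<close> by auto
    have "pt v = A" unfolding pt_def
      by (rule the_equality) (use A disj in auto)
    then show ?thesis using A by simp
  qed
  have pt_eq: "pt v = A" if "v \<in> A" "A \<in> P" "v \<in> V" for v A
    using pt[OF that(3)] that disj by blast
  obtain h k where h: "h ` P = {i::nat. i < k}" "inj_on h P"
    using finite_imp_inj_to_nat_seg[OF finP] by blast
  obtain g k2 where g: "g ` V = {i::nat. i < k2}" "inj_on g V"
    using finite_imp_inj_to_nat_seg[OF assms(1)] by blast
  have k2: "k2 = n" using g assms(2) by (metis card_Collect_less_nat card_image)
  have gn: "g v < n" if "v \<in> V" for v using g k2 that by auto
  define key where "key v = h (pt v) * n + g v" for v
  have keydiv: "key v div n = h (pt v)" if "v \<in> V" for v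
    using gn[OF that] unfolding key_def by simp
  have keymod: "key v mod n = g v" if "v \<in> V" for v
    using gn[OF that] unfolding key_def by simp
  have injkey: "inj_on key V"
  proof (rule inj_onI)
    fix u v assume "u \<in> V" "v \<in> V" "key u = key v"
    then have "g u = g v" using keymod by metis
    then show "u = v" using g(2) \<open>u \<in> V\<close> \<open>v \<in> V\<close> by (meson inj_onD)
  qed
  define K where "K = key ` V"
  have finK: "finite K" using assms(1) K_def by simp
  have cardK: "card K = n" using injkey assms(2) K_def by (simp add: card_image)
  define L where "L = sorted_list_of_set K"
  have lenL: "length L = n" using cardK L_def by simp
  have setL: "set L = K" using finK L_def by simp
  have distL: "distinct L" using L_def by simp
  have sortL: "sorted L" using L_def by simp
  define w where "w i = inv_into V key (L ! i)" for i
  have wV: "w i \<in> V" and kw: "key (w i) = L ! i" if "i < n" for i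
  proof -
    have "L ! i \<in> key ` V" using that lenL setL K_def nth_mem by metis
    then show "w i \<in> V" "key (w i) = L ! i" unfolding w_def
      by (auto simp: inv_into_into f_inv_into_f)
  qed
  have winj: "w i = w j \<Longrightarrow> i < n \<Longrightarrow> j < n \<Longrightarrow> i = j" for i j
    using kw distL lenL by (metis nth_eq_iff_index_eq)
  define m where "m = n - s - 1"
  have m1: "m \<ge> s + 1" and m2: "s + m < n" using assms(7) m_def by auto
  have diff: "pt (w i) \<noteq> pt (w (i + m))" if "i \<le> s" for i
  proof
    assume eq: "pt (w i) = pt (w (i + m))"
    define A where "A = pt (w i)"
    have iA: "i + m < n" using that m2 by simp
    have AP: "A \<in> P" using pt wV iA A_def by simp
    have sub: "w ` {i..i+m} \<subseteq> A"
    proof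
      fix x assume "x \<in> w ` {i..i+m}"
      then obtain j where j: "j \<in> {i..i+m}" "x = w j" by auto
      have jn: "j < n" using j iA by simp
      have "L ! i \<le> L ! j" "L ! j \<le> L ! (i+m)"
        using sortL lenL j jn iA by (auto intro: sorted_nth_mono)
      then have "L ! i div n \<le> L ! j div n" "L ! j div n \<le> L ! (i+m) div n"
        by (auto intro: div_le_mono)
      moreover have "L ! i div n = h A" using keydiv kw wV A_def that iA
        by (metis add_lessD1)
      moreover have "L ! (i+m) div n = h A" using keydiv kw wV A_def eq iA by metis
      ultimately have "h (pt (w j)) = h A" using keydiv kw wV jn by (metis le_antisym)
      then have "pt (w j) = A" using h(2) AP pt wV jn by (meson inj_onD)
      then show "x \<in> A" using pt wV jn j by metis
    qed
    have "inj_on w {i..i+m}" by (rule inj_onI) (use winj iA in auto)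
    then have "card (w ` {i..i+m}) = m + 1" by (simp add: card_image)
    moreover have "finite A" using AP UP assms(1) by (metis Union_upper finite_subset)
    ultimately have "card A \<ge> m + 1" using sub by (metis card_mono)
    then show False using small AP m_def assms(7) by force
  qed
  define M where "M = (\<lambda>i. {w i, w (i + m)}) ` {0..s}"
  have ME: "M \<subseteq> E"
  proof
    fix e assume "e \<in> M"
    then obtain i where i: "i \<le> s" "e = {w i, w (i+m)}" using M_def by auto
    have "i < n" "i + m < n" using i m2 by auto
    then show "e \<in> E" unfolding Edef using i diff[OF i(1)] pt wV by blast
  qed
  have injM: "inj_on (\<lambda>i. {w i, w (i + m)}) {0..s}"
  proof (rule inj_onI)
    fix i j assume ij: "i \<in> {0..s}" "j \<in> {0..s}" "{w i, w (i + m)} = {w j, w (j + m)}"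
    then have o: "w i = w j \<or> w i = w (j + m)" by (metis doubleton_eq_iff)
    have n: "i < n" "j < n" "j + m < n" using ij m2 by auto
    show "i = j"
    proof (cases "w i = w j")
      case True then show ?thesis using winj n by blast
    next
      case False then have "w i = w (j + m)" using o by blast
      then have "i = j + m" using winj n by blast
      then show ?thesis using ij m1 by simp
    qed
  qed
  have cardM: "card M = s + 1" using injM M_def by (simp add: card_image)
  have disjM: "\<forall>e\<in>M. \<forall>f\<in>M. e \<noteq> f \<longrightarrow> e \<inter> f = {}"
  proof (intro ballI impI)
    fix e f assume ef: "e \<in> M" "f \<in> M" "e \<noteq> f"
    from ef(1,2) obtain i j where i: "i \<le> s" "e = {w i, w (i+m)}" and j: "j \<le> s" "f = {w j, w (j+m)}"
      using M_def by auto
    have "i \<noteq> j" using i j \<open>e \<noteq> f\<close> by auto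
    have n: "i < n" "i + m < n" "j < n" "j + m < n" using i j m2 by auto
    have "w i \<noteq> w j" "w i \<noteq> w (j+m)" "w (i+m) \<noteq> w j" "w (i+m) \<noteq> w (j+m)"
    proof -
      have "i \<noteq> j" "i \<noteq> j + m" "i + m \<noteq> j" "i + m \<noteq> j + m" using \<open>i \<noteq> j\<close> i j m1 by auto
      then show "w i \<noteq> w j" "w i \<noteq> w (j+m)" "w (i+m) \<noteq> w j" "w (i+m) \<noteq> w (j+m)"
        using winj n by blast+
    qed
    then show "e \<inter> f = {}" using i j by auto
  qed
  have "contains_matching E (s + 1)"
    unfolding contains_matching_def
  proof (intro exI[of _ M] conjI)
    show "finite M" unfolding M_def by simp
  qed (use ME cardM disjM in auto)
  then show False using assms(6) by simp
qed

end
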